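(* Given integers $t,q\geqslant1$, there is a constant $C>0$ such that \[\frac{\sigma(n)}{n\log\log n}\geqslant C\] for infinitely many positive integers $n$ with $n\equiv t\pmod q$.
   Context: $\sigma(n)$ denotes the sum of the positive divisors of $n$. *)

theory Defs
  imports "HOL-Number_Theory.Number_Theory"
begin

definition divisor_sigma :: "nat \<Rightarrow> nat" where
  "divisor_sigma n = (\<Sum>d \<in> {d. d dvd n}. d)"

end

theory Submission
  imports Defs
begin

lemma harm_ln: "ln (real m + 1) \<le> (\<Sum>j<m. 1 / (real j + 1))"
proof (induction m)
  case 0 then show ?case by simp
next
  case (Suc m)
  have e: "real (Suc m) + 1 = (real m + 1) * (1 + 1/(real m + 1))" by (simp add: field_simps)
  have "ln (real (Suc m) + 1) = ln (real m + 1) + ln (1 + 1/(real m + 1))"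
    unfolding e by (rule ln_mult_pos) (auto simp: add_pos_pos)
  also have "ln (1 + 1/(real m + 1)) \<le> 1/(real m + 1)"
    by (rule ln_add_one_self_le_self) simp
  finally show ?case using Suc by simp
qed

lemma L_cong: "[(\<Prod>j<m. 1 + j*q) = 1] (mod (q::nat))"
proof (induction m)
  case 0 then show ?case by simp
next
  case (Suc m)
  have "[m*q = 0] (mod q)" by (simp add: cong_def)
  then have "[1 + m*q = 1 + 0] (mod q)" by (intro cong_add) auto
  then have "[1 + m*q = 1] (mod q)" by simp
  from cong_mult[OF Suc this] show ?case by simp
qed

lemma L_dvd: "j < m \<Longrightarrow> (1 + j*q) dvd (\<Prod>j<m. 1 + j*(q::nat))"
  using dvd_prodI[of "{..<m}" j "\<lambda>j. 1 + j*q"] by simp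

lemma sigma_lower:
  fixes n q m :: nat
  assumes n: "n > 0" and q: "q \<ge> 1" and dv: "\<And>j. j < m \<Longrightarrow> (1 + j*q) dvd n"
  shows "(\<Sum>j<m. n div (1 + j*q)) \<le> divisor_sigma n"
proof -
  let ?g = "\<lambda>j. n div (1 + j*q)"
  have inj: "inj_on ?g {..<m}"
  proof (rule inj_onI)
    fix i j assume i: "i \<in> {..<m}" and j: "j \<in> {..<m}" and e: "?g i = ?g j"
    have a: "(1 + i*q) * ?g i = n" using dv[of i] i by (metis dvd_mult_div_cancel lessThan_iff)
    have b: "(1 + j*q) * ?g j = n" using dv[of j] j by (metis dvd_mult_div_cancel lessThan_iff)
    have "?g i > 0" using a n by (metis gr0I mult_0_right)
    then have "1 + i*q = 1 + j*q" using a b e by (metis mult_right_cancel not_gr0)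
    then show "i = j" using q by simp
  qed
  have "(\<Sum>j<m. ?g j) = sum id (?g ` {..<m})"
    using sum.reindex[OF inj, of id] by simp
  also have "\<dots> \<le> sum id {d. d dvd n}"
    by (rule sum_mono2) (use finite_divisors_nat[OF n] dv in \<open>auto, metis dvd_mult_div_cancel dvd_triv_right\<close>)
  finally show ?thesis unfolding divisor_sigma_def by simp
qed

lemma main_m:
  fixes t q m :: nat
  assumes t: "t \<ge> 1" "t \<le> m" and q: "q \<ge> 1" "q \<le> m" and m: "m \<ge> 4"
  defines "n \<equiv> t * (\<Prod>j<m. 1 + j*q)"
  shows "n \<ge> m \<and> n > 0 \<and> [n = t] (mod q) \<and>
     real (divisor_sigma n) / (real n * ln (ln (real n))) \<ge> 1 / (3 * real q)"
proof -
  let ?L = "\<Prod>j<m. 1 + j*q"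
  have Lpos: "?L > 0" by (simp add: prod_pos)
  have npos: "n > 0" using t Lpos n_def by simp
  have "(1 + (m-1)*q) dvd ?L" using L_dvd[of "m-1" m q] m by simp
  then have "1 + (m-1)*q \<le> ?L" using Lpos by (simp add: dvd_imp_le)
  moreover have "m \<le> 1 + (m-1)*q"
  proof -
    have "(m-1)*1 \<le> (m-1)*q" using q by (intro mult_le_mono2) auto
    then show ?thesis using m by arith
  qed
  ultimately have "m \<le> ?L" by linarith
  moreover have "1*?L \<le> t*?L" using t by (intro mult_le_mono1) auto
  ultimately have nm: "m \<le> n" unfolding n_def by linarith
  have cong: "[n = t] (mod q)" unfolding n_def
    using cong_scalar_left[OF L_cong[where m=m and q=q], of t] by simp
  have dv: "\<And>j. j < m \<Longrightarrow> (1 + j*q) dvd n" unfolding n_def using L_dvd by auto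
  have s1: "(\<Sum>j<m. n div (1 + j*q)) \<le> divisor_sigma n"
    using sigma_lower[OF npos q(1) dv] by simp
  have s2: "real (\<Sum>j<m. n div (1 + j*q)) = (\<Sum>j<m. real n / (1 + real j * real q))"
    unfolding of_nat_sum
  proof (rule sum.cong[OF refl])
    fix j assume "j \<in> {..<m}"
    then have "(1 + j*q) dvd n" using dv by simp
    then show "real (n div (1 + j * q)) = real n / (1 + real j * real q)"
      by (simp add: real_of_nat_div)
  qed
  have s3: "(\<Sum>j<m. real n / (1 + real j * real q)) \<ge> (\<Sum>j<m. real n / real q * (1/(real j + 1)))"
  proof (rule sum_mono)
    fix j assume "j \<in> {..<m}"
    have "1 + real j * real q \<le> real q * (real j + 1)" using q by (simp add: algebra_simps)
    then have "real n / (real q * (real j + 1)) \<le> real n / (1 + real j * real q)"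
      using q by (intro divide_left_mono) (simp_all add: zero_less_mult_iff add_pos_nonneg)
    then show "real n / real q * (1/(real j + 1)) \<le> real n / (1 + real j * real q)" by simp
  qed
  have s4: "(\<Sum>j<m. real n / real q * (1/(real j + 1))) = real n / real q * (\<Sum>j<m. 1/(real j + 1))"
    by (simp add: sum_distrib_left)
  have lnm: "ln (real m) \<le> ln (real m + 1)" using m by simp
  have hh: "real n / real q * ln (real m) \<le> real n / real q * (\<Sum>j<m. 1/(real j + 1))"
    using harm_ln[of m] lnm by (intro mult_left_mono) auto
  have sig: "real n * ln (real m) / real q \<le> real (divisor_sigma n)"
  proof -
    have "real (\<Sum>j<m. n div (1 + j*q)) \<le> real (divisor_sigma n)" using s1 by (rule of_nat_mono)
    moreover have "real n * ln (real m) / real q = real n / real q * ln (real m)" by simp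
    ultimately show ?thesis using s2 s3 s4 hh by linarith
  qed
  have fac: "\<And>j. j \<in> {..<m} \<Longrightarrow> 1 + j*q \<le> m^3"
  proof -
    fix j assume "j \<in> {..<m}"
    then have "1 + j*q \<le> 1 + m*m" using q by (intro add_left_mono mult_mono) auto
    also have "\<dots> \<le> m*m*m"
    proof -
      have "m*m*4 \<le> m*m*m" using m by (intro mult_le_mono2) auto
      moreover have "1 \<le> m*m" using m by simp
      ultimately show ?thesis by linarith
    qed
    finally show "1 + j*q \<le> m^3" by (simp add: power3_eq_cube)
  qed
  have "?L \<le> (m^3)^m" using m fac by (intro prod_le_power) auto
  then have "n \<le> m * (m^3)^m" unfolding n_def using t by (intro mult_mono) auto
  also have "\<dots> \<le> m^(4*m)"
  proof -
    have "m * (m^3)^m = m^(3*m+1)" by (simp add: power_mult power_add)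
    also have "\<dots> \<le> m^(4*m)" using m by (intro power_increasing) auto
    finally show ?thesis .
  qed
  finally have nle: "real n \<le> real m ^ (4*m)" by (metis of_nat_le_iff of_nat_power)
  have mpos: "real m > 0" using m by simp
  have lnn: "ln (real n) \<le> 4 * real m * ln (real m)"
  proof -
    have "ln (real n) \<le> ln (real m ^ (4*m))" using nle npos by (intro ln_mono) auto
    also have "\<dots> = 4 * real m * ln (real m)" using mpos by (simp add: ln_realpow)
    finally show ?thesis .
  qed
  have lnmm: "ln (real m) \<le> real m" using ln_le_minus_one[OF mpos] by linarith
  have lnm_pos: "ln (real m) > 0" using m by simp
  have "4 * real m * ln (real m) \<le> 4 * real m * real m"
    using lnmm mpos by (intro mult_left_mono) auto
  then have lnn2: "ln (real n) \<le> 4 * real m ^ 2"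
    using lnn by (simp add: power2_eq_square)
  have n3: "real n \<ge> 4" using nm m by simp
  have lnnpos: "ln (real n) > 1"
  proof -
    have "exp 1 < (4::real)" using exp_le by simp
    then have "ln (exp 1) < ln (real n)" using n3 by (subst ln_less_cancel_iff) auto
    then show ?thesis by simp
  qed
  have llpos: "ln (ln (real n)) > 0" using lnnpos by simp
  have "ln (ln (real n)) \<le> ln (4 * real m ^ 2)" using lnn2 lnnpos by (intro ln_mono) auto
  also have "\<dots> = ln 4 + 2 * ln (real m)" using mpos by (simp add: ln_mult_pos ln_realpow)
  also have "\<dots> \<le> 3 * ln (real m)" using m by simp
  finally have ll: "ln (ln (real n)) \<le> 3 * ln (real m)" .
  have qpos: "real q > 0" using q by simp
  have npos': "real n > 0" using npos by simp
  have "1 / (3 * real q) * (real n * ln (ln (real n))) \<le> 1 / (3 * real q) * (real n * (3 * ln (real m)))"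
  proof (rule mult_left_mono)
    show "real n * ln (ln (real n)) \<le> real n * (3 * ln (real m))"
      using ll npos' by (rule mult_left_mono[OF _ less_imp_le])
    show "0 \<le> 1 / (3 * real q)" using qpos by simp
  qed
  also have "\<dots> = real n * ln (real m) / real q" by simp
  also have "\<dots> \<le> real (divisor_sigma n)" by (rule sig)
  finally have "1 / (3 * real q) \<le> real (divisor_sigma n) / (real n * ln (ln (real n)))"
    using npos' llpos by (simp add: pos_le_divide_eq)
  with nm npos cong show ?thesis by blast
qed

theorem lemma5p7:
  fixes t q :: nat
  assumes "t \<ge> 1" and "q \<ge> 1"
  shows "\<exists>C::real. C > 0 \<and>
    infinite {n::nat. n > 0 \<and> [n = t] (mod q) \<and>
      real (divisor_sigma n) / (real n * ln (ln (real n))) \<ge> C}"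
proof (intro exI conjI)
  show "1 / (3 * real q) > 0" using assms by simp
  show "infinite {n::nat. n > 0 \<and> [n = t] (mod q) \<and>
      real (divisor_sigma n) / (real n * ln (ln (real n))) \<ge> 1 / (3 * real q)}"
    unfolding infinite_nat_iff_unbounded_le
  proof
    fix N
    define m where "m = max (max 4 N) (max t q)"
    have "m \<ge> 4" "t \<le> m" "q \<le> m" "N \<le> m" unfolding m_def by auto
    define n where "n = t * (\<Prod>j<m. 1 + j*q)"
    have H: "n \<ge> m \<and> n > 0 \<and> [n = t] (mod q) \<and>
     real (divisor_sigma n) / (real n * ln (ln (real n))) \<ge> 1 / (3 * real q)"
      unfolding n_def by (rule main_m[OF assms(1) \<open>t \<le> m\<close> assms(2) \<open>q \<le> m\<close> \<open>m \<ge> 4\<close>])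
    then have "n \<ge> N" using \<open>N \<le> m\<close> by linarith
    with H show "\<exists>n\<ge>N. n \<in> {n::nat. n > 0 \<and> [n = t] (mod q) \<and>
      real (divisor_sigma n) / (real n * ln (ln (real n))) \<ge> 1 / (3 * real q)}"
      by blast
  qed
qed

end
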